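(* Assume rewards are Gaussian with known variances, $K$ is a power of $2$ (so $m=\log_2K$), $n_s=n/\log_2K$ is an integer, and in every stage $s$ all ideal allocations $\lambda_{s,i}=\sigma_i^2 n_s/\sum_{j\in\mathcal{A}_s}\sigma_j^2$ are integers. Then the arm $\hat I$ returned by \texttt{SHVar} satisfies $$\mathbb{P}(\hat I\neq 1)\le 2\log_2K\,\exp\left[-\frac{n\,\Delta_{\min}^2}{4\log_2K\sum_{j\in\mathcal{A}}\sigma_j^2}\right],$$ where $\Delta_{\min}=\mu_1-\mu_2$.
   Context: Stochastic bandit with arms $\mathcal{A}=[K]$. Each pull of arm $i$ returns an independent reward distributed as $\mathcal{N}(\mu_i,\sigma_i^2)$, independently across pulls. The arms are ordered so that $\mu_1>\mu_2\ge\dots\ge\mu_K$; the gaps are $\Delta_i=\mu_1-\mu_i$. Sequential-halving meta-algorithm with budget $n$: - There are $m=\lceil\log_2K\rceil$ stages, with $\mathcal{A}_1=\mathcal{A}$ and $n_s=\lfloor n/m\rfloor$. - In stage $s$, for rounds $t=1,\dots,n_s$, a base rule selects $I_{s,t}\in\mathcal{A}_s$, and the reward $Y_{s,t,I_{s,t}}$ is observed. - $N_{s,t,i}=\sum_{\ell<t}\mathbb{1}\{I_{s,\ell}=i\}$. - $\hat\mu_{s,i}$ is the average reward of arm $i$ in stage $s$. - $\mathcal{A}_{s+1}$ consists of the $\lceil|\mathcal{A}_s|/2\rceil$ arms with highest $\hat\mu_{s,i}$. - $\hat I$ is the single arm of $\mathcal{A}_{m+1}$. \texttt{SHVar} uses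 the base rule $I_{s,t}\in\arg\max_{i\in\mathcal{A}_s}\sigma_i^2/N_{s,t,i}$, with the convention $\sigma_i^2/0=+\infty$. *)

theory Defs
  imports "HOL-Probability.Probability"
begin

text \<open>Arms are 1,...,K. Rewards of the whole run are given as a table
  Y s t i (stage s, round t, arm i); the learner observes Y s t (I s t).\<close>

definition var_ratio :: "real \<Rightarrow> nat \<Rightarrow> ereal" where
  "var_ratio v k = (if k = 0 then PInfty else ereal (v / real k))"

text \<open>A tie-breaking rule realising the SHVar base rule
  I in argmax_{i in A} sigma_i^2 / N_i  (v i = sigma_i^2).\<close>
definition is_var_rule :: "(nat \<Rightarrow> real) \<Rightarrow> (nat set \<Rightarrow> (nat \<Rightarrow> nat) \<Rightarrow> nat) \<Rightarrow> bool" where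
  "is_var_rule v ch \<longleftrightarrow>
     (\<forall>A N. finite A \<and> A \<noteq> {} \<longrightarrow>
        ch A N \<in> A \<and> (\<forall>j\<in>A. var_ratio (v j) (N j) \<le> var_ratio (v (ch A N)) (N (ch A N))))"

definition is_halving_rule :: "(nat set \<Rightarrow> (nat \<Rightarrow> real) \<Rightarrow> nat set) \<Rightarrow> bool" where
  "is_halving_rule sel \<longleftrightarrow>
     (\<forall>A f. finite A \<and> A \<noteq> {} \<longrightarrow>
        sel A f \<subseteq> A \<and> card (sel A f) = (card A + 1) div 2 \<and>
        (\<forall>i\<in>sel A f. \<forall>j\<in>A - sel A f. f j \<le> f i))"

text \<open>cnt ch A t i = number of pulls of arm i during rounds 1..t of a stage with active set A;
  so N_{s,t,i} = cnt ch A (t-1) i.\<close>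
primrec cnt :: "(nat set \<Rightarrow> (nat \<Rightarrow> nat) \<Rightarrow> nat) \<Rightarrow> nat set \<Rightarrow> nat \<Rightarrow> nat \<Rightarrow> nat" where
  "cnt ch A 0 = (\<lambda>i. 0)"
| "cnt ch A (Suc t) = (let c = cnt ch A t in c(ch A c := c (ch A c) + 1))"

definition pull :: "(nat set \<Rightarrow> (nat \<Rightarrow> nat) \<Rightarrow> nat) \<Rightarrow> nat set \<Rightarrow> nat \<Rightarrow> nat" where
  "pull ch A t = ch A (cnt ch A (t - 1))"

definition muhat :: "(nat set \<Rightarrow> (nat \<Rightarrow> nat) \<Rightarrow> nat) \<Rightarrow> nat \<Rightarrow> (nat \<Rightarrow> nat \<Rightarrow> nat \<Rightarrow> real)
    \<Rightarrow> nat \<Rightarrow> nat set \<Rightarrow> nat \<Rightarrow> real" where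
  "muhat ch ns Y s A i =
     (\<Sum>t\<in>{t\<in>{1..ns}. pull ch A t = i}. Y s t i) / real (card {t\<in>{1..ns}. pull ch A t = i})"

text \<open>sh_set ... k is the active set A_{k+1}: A_1 = {1..K}, and A_{s+1} is obtained from A_s
  using the stage-s rewards.\<close>
primrec sh_set :: "(nat set \<Rightarrow> (nat \<Rightarrow> nat) \<Rightarrow> nat) \<Rightarrow> (nat set \<Rightarrow> (nat \<Rightarrow> real) \<Rightarrow> nat set)
    \<Rightarrow> nat \<Rightarrow> nat \<Rightarrow> (nat \<Rightarrow> nat \<Rightarrow> nat \<Rightarrow> real) \<Rightarrow> nat \<Rightarrow> nat set" where
  "sh_set ch sel K ns Y 0 = {1..K}"
| "sh_set ch sel K ns Y (Suc s) =
     sel (sh_set ch sel K ns Y s) (muhat ch ns Y (Suc s) (sh_set ch sel K ns Y s))"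

definition sh_out :: "(nat set \<Rightarrow> (nat \<Rightarrow> nat) \<Rightarrow> nat) \<Rightarrow> (nat set \<Rightarrow> (nat \<Rightarrow> real) \<Rightarrow> nat set)
    \<Rightarrow> nat \<Rightarrow> nat \<Rightarrow> nat \<Rightarrow> (nat \<Rightarrow> nat \<Rightarrow> nat \<Rightarrow> real) \<Rightarrow> nat" where
  "sh_out ch sel K m ns Y = the_elem (sh_set ch sel K ns Y m)"

end

theory Submission
  imports Defs
begin

definition good :: "(nat \<Rightarrow> real) \<Rightarrow> nat \<Rightarrow> nat \<Rightarrow> nat set \<Rightarrow> bool" where
  "good v ns K B \<longleftrightarrow> B \<subseteq> {1..K} \<and> B \<noteq> {} \<and> (\<forall>i\<in>B. v i * real ns / (\<Sum>j\<in>B. v j) \<in> \<int>)"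

lemma ch_in:
  assumes "is_var_rule v ch" "finite B" "B \<noteq> {}"
  shows "ch B N \<in> B"
  using assms unfolding is_var_rule_def by blast

lemma cnt_outside:
  assumes "is_var_rule v ch" "finite B" "B \<noteq> {}" "i \<notin> B"
  shows "cnt ch B t i = 0"
  using assms
proof (induction t)
  case 0 then show ?case by simp
next
  case (Suc t)
  have "ch B (cnt ch B t) \<in> B" using ch_in[OF Suc.prems(1-3)] .
  then show ?case using Suc by (auto simp: Let_def)
qed

lemma cnt_sum:
  assumes "is_var_rule v ch" "finite B" "B \<noteq> {}"
  shows "(\<Sum>i\<in>B. cnt ch B t i) = t"
proof (induction t)
  case 0 then show ?case by simp
next
  case (Suc t)
  define c where "c = cnt ch B t"
  define k where "k = ch B c"
  have k: "k \<in> B" unfolding k_def using ch_in[OF assms] .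
  have "(\<Sum>i\<in>B. cnt ch B (Suc t) i) = (\<Sum>i\<in>B. c i + (if i = k then 1 else 0))"
    by (intro sum.cong) (auto simp: c_def k_def Let_def)
  also have "\<dots> = (\<Sum>i\<in>B. c i) + 1"
    using k assms(2) by (simp add: sum.distrib)
  finally show ?case using Suc by (simp add: c_def)
qed

lemma cnt_card:
  "cnt ch B t i = card {u\<in>{1..t}. pull ch B u = i}"
proof (induction t)
  case 0 then show ?case by simp
next
  case (Suc t)
  have eq: "{u\<in>{1..Suc t}. pull ch B u = i} =
      (if pull ch B (Suc t) = i then insert (Suc t) {u\<in>{1..t}. pull ch B u = i} else {u\<in>{1..t}. pull ch B u = i})"
    by (auto simp: le_Suc_eq)
  have p: "pull ch B (Suc t) = ch B (cnt ch B t)" by (simp add: pull_def)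
  show ?case
  proof (cases "pull ch B (Suc t) = i")
    case True
    then show ?thesis using Suc p by (simp only: eq if_True) (auto simp: Let_def)
  next
    case False
    then show ?thesis using Suc p by (simp only: eq if_False) (auto simp: Let_def)
  qed
qed

lemma cnt_le:
  assumes rule: "is_var_rule v ch" and g: "good v ns K B" and vpos: "\<forall>i\<in>B. v i > 0"
    and t: "t \<le> ns"
  shows "\<forall>i\<in>B. real (cnt ch B t i) \<le> v i * real ns / (\<Sum>j\<in>B. v j)"
  using t
proof (induction t)
  case 0
  have fin: "finite B" using g unfolding good_def by (meson finite_atLeastAtMost finite_subset)
  have "(\<Sum>j\<in>B. v j) > 0" using g vpos fin unfolding good_def by (intro sum_pos) auto
  then show ?case using vpos by (auto intro!: divide_nonneg_pos)
next
  case (Suc t)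
  have fin: "finite B" and ne: "B \<noteq> {}" using g unfolding good_def
    by (auto intro: finite_subset)
  define S where "S = (\<Sum>j\<in>B. v j)"
  have Spos: "S > 0" using vpos fin ne unfolding S_def by (intro sum_pos) auto
  define c where "c = cnt ch B t"
  define k where "k = ch B c"
  have k: "k \<in> B" unfolding k_def using ch_in[OF rule fin ne] .
  have IH: "\<forall>i\<in>B. real (c i) \<le> v i * real ns / S" using Suc unfolding c_def S_def by simp
  have max: "\<forall>j\<in>B. var_ratio (v j) (c j) \<le> var_ratio (v k) (c k)"
    using rule fin ne unfolding is_var_rule_def k_def by blast
  have lt: "real (c k) < v k * real ns / S"
  proof (rule ccontr)
    assume "\<not> ?thesis"
    then have eqk: "real (c k) = v k * real ns / S" using IH k by force
    have nspos: "ns > 0" using Suc.prems by simp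
    have ckpos: "c k > 0"
    proof -
      have "v k * real ns / S > 0" using vpos k nspos Spos by simp
      then show ?thesis using eqk by simp
    qed
    have vr: "var_ratio (v k) (c k) = ereal (S / real ns)"
      using ckpos eqk vpos k Spos nspos by (simp add: var_ratio_def field_simps)
    have ge: "\<forall>j\<in>B. real (c j) \<ge> v j * real ns / S"
    proof
      fix j assume j: "j \<in> B"
      have le: "var_ratio (v j) (c j) \<le> ereal (S / real ns)" using max j vr by simp
      then have cj: "c j \<noteq> 0" by (cases "c j = 0") (auto simp: var_ratio_def)
      then have "v j / real (c j) \<le> S / real ns" using le by (simp add: var_ratio_def)
      then show "real (c j) \<ge> v j * real ns / S"
        using cj Spos nspos by (simp add: field_simps)
    qed
    have "(\<Sum>j\<in>B. v j * real ns / S) \<le> (\<Sum>j\<in>B. real (c j))"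
      using ge by (intro sum_mono) auto
    also have "\<dots> = real t" using cnt_sum[OF rule fin ne, of t] unfolding c_def
      by (metis of_nat_sum)
    finally have "(\<Sum>j\<in>B. v j) * real ns / S \<le> real t"
      by (simp add: sum_divide_distrib[symmetric] sum_distrib_right[symmetric])
    then have "real ns \<le> real t" using Spos unfolding S_def by simp
    then show False using Suc.prems by simp
  qed
  have kint: "v k * real ns / S \<in> \<int>" using g k unfolding good_def S_def by blast
  then obtain z where z: "v k * real ns / S = of_int z" by (auto elim: Ints_cases)
  have "real (c k) + 1 \<le> v k * real ns / S"
  proof -
    have "int (c k) < z" using lt z by (metis of_int_less_iff of_int_of_nat_eq)
    then have "int (c k) + 1 \<le> z" by simp
    then have "real (c k) + 1 \<le> real_of_int z" by (metis of_int_le_iff of_int_of_nat_eq of_int_add of_int_1)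
    then show ?thesis using z by simp
  qed
  then show ?case using IH
    by (auto simp: Let_def c_def[symmetric] k_def[symmetric] S_def[symmetric])
qed

lemma cnt_eq:
  assumes rule: "is_var_rule v ch" and g: "good v ns K B" and vpos: "\<forall>i\<in>B. v i > 0"
    and i: "i \<in> B"
  shows "real (cnt ch B ns i) = v i * real ns / (\<Sum>j\<in>B. v j)"
proof (rule ccontr)
  assume ne0: "\<not> ?thesis"
  have fin: "finite B" and ne: "B \<noteq> {}" using g unfolding good_def
    by (auto intro: finite_subset)
  define S where "S = (\<Sum>j\<in>B. v j)"
  have Spos: "S > 0" using vpos fin ne unfolding S_def by (intro sum_pos) auto
  have le: "\<forall>i\<in>B. real (cnt ch B ns i) \<le> v i * real ns / S"
    using cnt_le[OF rule g vpos order_refl] unfolding S_def .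
  have "(\<Sum>j\<in>B. real (cnt ch B ns j)) < (\<Sum>j\<in>B. v j * real ns / S)"
    using le ne0 i fin unfolding S_def
    by (intro sum_strict_mono_ex1) (auto simp: S_def less_le)
  also have "\<dots> = real ns" using Spos
    by (simp add: sum_divide_distrib[symmetric] sum_distrib_right[symmetric] S_def)
  finally show False using cnt_sum[OF rule fin ne, of ns] by (metis of_nat_sum less_irrefl)
qed

primrec reach :: "(nat set \<Rightarrow> (nat \<Rightarrow> nat) \<Rightarrow> nat) \<Rightarrow> (nat\<Rightarrow>real) \<Rightarrow> nat \<Rightarrow> nat
    \<Rightarrow> (nat\<times>nat\<times>nat \<Rightarrow> real) \<Rightarrow> nat \<Rightarrow> nat set set" where
  "reach ch v K ns x 0 = {{1..K}}"
| "reach ch v K ns x (Suc k) = {B'. \<exists>B\<in>reach ch v K ns x k. good v ns K B \<and> B' \<subseteq> B \<and>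
      card B' = (card B + 1) div 2 \<and>
      (\<forall>i\<in>B'. \<forall>j\<in>B - B'. muhat ch ns (\<lambda>s t i. x (s,t,i)) (Suc k) B j
                          \<le> muhat ch ns (\<lambda>s t i. x (s,t,i)) (Suc k) B i)}"

lemma reach_subset: "B \<in> reach ch v K ns x k \<Longrightarrow> B \<subseteq> {1..K}"
  by (cases k) (auto simp: good_def)

lemma muhat_cong:
  assumes "\<forall>t\<in>{1..ns}. y s t j = y' s t j"
  shows "muhat ch ns y s B j = muhat ch ns y' s B j"
  unfolding muhat_def using assms by (intro arg_cong2[where f="(/)"] sum.cong) auto

lemma reach_cong:
  assumes "\<forall>s\<in>{1..k}. \<forall>t\<in>{1..ns}. \<forall>i\<in>{1..K}. x (s,t,i) = x' (s,t,i)"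
  shows "reach ch v K ns x k = reach ch v K ns x' k"
  using assms
proof (induction k)
  case 0 then show ?case by simp
next
  case (Suc k)
  have IH: "reach ch v K ns x k = reach ch v K ns x' k" using Suc by auto
  have mu: "muhat ch ns (\<lambda>s t i. x (s,t,i)) (Suc k) B j = muhat ch ns (\<lambda>s t i. x' (s,t,i)) (Suc k) B j"
    if "j \<in> {1..K}" for B j
    using Suc.prems that by (intro muhat_cong) auto
  have sub: "B \<subseteq> {1..K}" if "good v ns K B" for B using that by (simp add: good_def)
  show ?case unfolding reach.simps IH
  proof (rule Collect_cong, rule bex_cong[OF refl])
    fix B' B
    show "(good v ns K B \<and> B' \<subseteq> B \<and> card B' = (card B + 1) div 2 \<and>
      (\<forall>i\<in>B'. \<forall>j\<in>B - B'. muhat ch ns (\<lambda>s t i. x (s,t,i)) (Suc k) B j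
                          \<le> muhat ch ns (\<lambda>s t i. x (s,t,i)) (Suc k) B i)) =
      (good v ns K B \<and> B' \<subseteq> B \<and> card B' = (card B + 1) div 2 \<and>
      (\<forall>i\<in>B'. \<forall>j\<in>B - B'. muhat ch ns (\<lambda>s t i. x' (s,t,i)) (Suc k) B j
                          \<le> muhat ch ns (\<lambda>s t i. x' (s,t,i)) (Suc k) B i))"
    proof (cases "good v ns K B \<and> B' \<subseteq> B")
      case True
      then have eq: "\<And>j. j \<in> B \<Longrightarrow> muhat ch ns (\<lambda>s t i. x (s,t,i)) (Suc k) B j = muhat ch ns (\<lambda>s t i. x' (s,t,i)) (Suc k) B j"
        using mu sub by blast
      have "(\<forall>i\<in>B'. \<forall>j\<in>B - B'. muhat ch ns (\<lambda>s t i. x (s,t,i)) (Suc k) B j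
                          \<le> muhat ch ns (\<lambda>s t i. x (s,t,i)) (Suc k) B i) =
            (\<forall>i\<in>B'. \<forall>j\<in>B - B'. muhat ch ns (\<lambda>s t i. x' (s,t,i)) (Suc k) B j
                          \<le> muhat ch ns (\<lambda>s t i. x' (s,t,i)) (Suc k) B i)"
      proof (intro ball_cong refl)
        fix i j assume ij: "i \<in> B'" "j \<in> B - B'"
        have "i \<in> B" "j \<in> B" using ij True by auto
        then show "(muhat ch ns (\<lambda>s t i. x (s,t,i)) (Suc k) B j
                          \<le> muhat ch ns (\<lambda>s t i. x (s,t,i)) (Suc k) B i) =
            (muhat ch ns (\<lambda>s t i. x' (s,t,i)) (Suc k) B j
                          \<le> muhat ch ns (\<lambda>s t i. x' (s,t,i)) (Suc k) B i)"
          using eq by presburger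
      qed
      then show ?thesis by simp
    next
      case False then show ?thesis by blast
    qed
  qed
qed

lemma card_sh_set:
  assumes halving: "is_halving_rule sel" and k: "k \<le> m" and K: "K = 2 ^ m"
  shows "sh_set ch sel K ns y k \<subseteq> {1..K} \<and> card (sh_set ch sel K ns y k) = 2 ^ (m - k)"
  using k
proof (induction k)
  case 0 then show ?case using K by simp
next
  case (Suc k)
  let ?A = "sh_set ch sel K ns y k"
  have IH: "?A \<subseteq> {1..K}" "card ?A = 2 ^ (m - k)" using Suc by auto
  have fin: "finite ?A" using IH(1) by (rule finite_subset) simp
  have ne: "?A \<noteq> {}" using IH(2) by auto
  let ?f = "muhat ch ns y (Suc k) ?A"
  have h: "sel ?A ?f \<subseteq> ?A" "card (sel ?A ?f) = (card ?A + 1) div 2"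
    using halving fin ne unfolding is_halving_rule_def by blast+
  have "m - k = Suc (m - Suc k)" using Suc.prems by simp
  then have "(card ?A + 1) div 2 = 2 ^ (m - Suc k)" using IH(2) by simp
  then show ?case using h IH by auto
qed

lemma sh_set_reach:
  assumes halving: "is_halving_rule sel" and K: "K = 2 ^ m" and k: "k \<le> m"
    and integ: "\<forall>s\<in>{1..m}. let A = sh_set ch sel K ns (\<lambda>s t i. x (s,t,i)) (s - 1) in
           \<forall>i\<in>A. v i * real ns / (\<Sum>j\<in>A. v j) \<in> \<int>"
  shows "sh_set ch sel K ns (\<lambda>s t i. x (s,t,i)) k \<in> reach ch v K ns x k"
  using k
proof (induction k)
  case 0 then show ?case by simp
next
  case (Suc k)
  let ?y = "\<lambda>s t i. x (s,t,i)"
  let ?A = "sh_set ch sel K ns ?y k"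
  have c: "?A \<subseteq> {1..K}" "card ?A = 2 ^ (m - k)" using card_sh_set[OF halving _ K, of k] Suc.prems by auto
  have fin: "finite ?A" using c(1) by (rule finite_subset) simp
  have ne: "?A \<noteq> {}" using c(2) by auto
  have "Suc k \<in> {1..m}" using Suc.prems by simp
  from bspec[OF integ this] have "\<forall>i\<in>?A. v i * real ns / (\<Sum>j\<in>?A. v j) \<in> \<int>"
    by (simp add: Let_def)
  then have g: "good v ns K ?A" using c ne by (simp add: good_def)
  let ?f = "muhat ch ns ?y (Suc k) ?A"
  have h: "sel ?A ?f \<subseteq> ?A" "card (sel ?A ?f) = (card ?A + 1) div 2"
      "\<forall>i\<in>sel ?A ?f. \<forall>j\<in>?A - sel ?A ?f. ?f j \<le> ?f i"
    using halving fin ne unfolding is_halving_rule_def by blast+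
  show ?case using Suc g h by auto
qed

lemma top_unique:
  assumes "finite B" "B1 \<subseteq> B" "B2 \<subseteq> B" "card B1 = card B2"
    and inj: "\<forall>i\<in>B. \<forall>j\<in>B. i \<noteq> j \<longrightarrow> f i \<noteq> f j"
    and t1: "\<forall>i\<in>B1. \<forall>j\<in>B - B1. f j \<le> (f i :: real)"
    and t2: "\<forall>i\<in>B2. \<forall>j\<in>B - B2. f j \<le> f i"
  shows "B1 = B2"
proof (rule ccontr)
  assume "B1 \<noteq> B2"
  have f1: "finite B1" "finite B2" using finite_subset[OF assms(2) assms(1)] finite_subset[OF assms(3) assms(1)] by auto
  have "\<not> B1 \<subseteq> B2"
  proof
    assume "B1 \<subseteq> B2"
    then have "B1 = B2" using f1 assms(4) by (metis card_subset_eq)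
    then show False using \<open>B1 \<noteq> B2\<close> by simp
  qed
  then obtain i where i: "i \<in> B1" "i \<notin> B2" by auto
  have "B2 \<subseteq> B1"
  proof
    fix j assume j: "j \<in> B2"
    show "j \<in> B1"
    proof (rule ccontr)
      assume "j \<notin> B1"
      have "i \<noteq> j" using i j by auto
      have "f i \<le> f j" using t2 j i assms(2) by auto
      moreover have "f j \<le> f i" using t1 i j \<open>j \<notin> B1\<close> assms(3) by auto
      ultimately have "f i = f j" by simp
      then show False using inj \<open>i\<noteq>j\<close> i j assms(2,3) by auto
    qed
  qed
  then have "B1 = B2" using f1 assms(4) by (metis card_subset_eq)
  then show False using \<open>B1 \<noteq> B2\<close> by simp
qed

definition tiefree :: "(nat set \<Rightarrow> (nat \<Rightarrow> nat) \<Rightarrow> nat) \<Rightarrow> (nat\<Rightarrow>real) \<Rightarrow> nat \<Rightarrow> nat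
    \<Rightarrow> (nat\<times>nat\<times>nat \<Rightarrow> real) \<Rightarrow> nat \<Rightarrow> bool" where
  "tiefree ch v K ns x k \<longleftrightarrow> (\<forall>s\<in>{1..k}. \<forall>B\<in>Pow {1..K}. good v ns K B \<longrightarrow>
     (\<forall>i\<in>B. \<forall>j\<in>B. i \<noteq> j \<longrightarrow> muhat ch ns (\<lambda>s t i. x (s,t,i)) s B i \<noteq> muhat ch ns (\<lambda>s t i. x (s,t,i)) s B j))"

lemma reach_unique:
  assumes "tiefree ch v K ns x k" "B1 \<in> reach ch v K ns x k" "B2 \<in> reach ch v K ns x k"
  shows "B1 = B2"
  using assms
proof (induction k arbitrary: B1 B2)
  case 0 then show ?case by simp
next
  case (Suc k)
  have tf: "tiefree ch v K ns x k" using Suc.prems(1) by (auto simp: tiefree_def)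
  obtain C1 where C1: "C1 \<in> reach ch v K ns x k" "good v ns K C1" "B1 \<subseteq> C1" "card B1 = (card C1 + 1) div 2"
     "\<forall>i\<in>B1. \<forall>j\<in>C1 - B1. muhat ch ns (\<lambda>s t i. x (s,t,i)) (Suc k) C1 j
                          \<le> muhat ch ns (\<lambda>s t i. x (s,t,i)) (Suc k) C1 i"
    using Suc.prems(2) by auto
  obtain C2 where C2: "C2 \<in> reach ch v K ns x k" "good v ns K C2" "B2 \<subseteq> C2" "card B2 = (card C2 + 1) div 2"
     "\<forall>i\<in>B2. \<forall>j\<in>C2 - B2. muhat ch ns (\<lambda>s t i. x (s,t,i)) (Suc k) C2 j
                          \<le> muhat ch ns (\<lambda>s t i. x (s,t,i)) (Suc k) C2 i"
    using Suc.prems(3) by auto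
  have "C1 = C2" using Suc.IH[OF tf C1(1) C2(1)] .
  have sub: "C1 \<subseteq> {1..K}" using C1(2) by (simp add: good_def)
  have inj: "\<forall>i\<in>C1. \<forall>j\<in>C1. i \<noteq> j \<longrightarrow> muhat ch ns (\<lambda>s t i. x (s,t,i)) (Suc k) C1 i \<noteq> muhat ch ns (\<lambda>s t i. x (s,t,i)) (Suc k) C1 j"
    using Suc.prems(1) C1(2) sub unfolding tiefree_def by auto
  have finC: "finite C1" using sub by (rule finite_subset) simp
  show ?case
    apply (rule top_unique[OF finC C1(3) _ _ inj C1(5)])
    subgoal using C2(3) \<open>C1 = C2\<close> by simp
    subgoal using C1(4) C2(4) \<open>C1 = C2\<close> by simp
    subgoal using C2(5) \<open>C1 = C2\<close> by simp
    done
qed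

definition ext :: "(nat\<times>nat\<times>nat) set \<Rightarrow> (nat\<times>nat\<times>nat \<Rightarrow> real) \<Rightarrow> nat\<times>nat\<times>nat \<Rightarrow> real" where
  "ext L x idx = (if idx \<in> L then x idx else 0)"

lemma meas_ext[measurable]: "(\<lambda>x. ext L x idx) \<in> borel_measurable (PiM L (\<lambda>_. borel))"
  by (cases "idx \<in> L") (auto simp: ext_def)

lemma meas_muhat[measurable]:
  "(\<lambda>x. muhat ch ns (\<lambda>s t i. ext L x (s,t,i)) s B j) \<in> borel_measurable (PiM L (\<lambda>_. borel))"
  unfolding muhat_def by (intro borel_measurable_divide borel_measurable_sum meas_ext borel_measurable_const)

lemma pred_bex_fin:
  fixes M :: "'a measure" and P :: "'i \<Rightarrow> 'a \<Rightarrow> bool"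
  assumes "finite I" "\<And>i. i \<in> I \<Longrightarrow> Measurable.pred M (P i)"
  shows "Measurable.pred M (\<lambda>x. \<exists>i\<in>I. P i x)"
proof -
  have "{x\<in>space M. \<exists>i\<in>I. P i x} = (\<Union>i\<in>I. {x\<in>space M. P i x})" by auto
  moreover have "(\<Union>i\<in>I. {x\<in>space M. P i x}) \<in> sets M"
    using assms by (intro sets.finite_UN) (auto simp: Measurable.pred_def)
  ultimately show ?thesis by (simp add: Measurable.pred_def)
qed

lemma pred_ball_fin:
  fixes M :: "'a measure" and P :: "'i \<Rightarrow> 'a \<Rightarrow> bool"
  assumes "finite I" "\<And>i. i \<in> I \<Longrightarrow> Measurable.pred M (P i)"
  shows "Measurable.pred M (\<lambda>x. \<forall>i\<in>I. P i x)"
proof -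
  have "Measurable.pred M (\<lambda>x. \<not> (\<exists>i\<in>I. \<not> P i x))"
    using pred_bex_fin[OF assms(1), where M=M and P="\<lambda>i x. \<not> P i x"] assms(2) by (intro pred_intros_logic) auto
  then show ?thesis by simp
qed

lemma pred_const_bool: "Measurable.pred M (\<lambda>x. b)"
  by (rule measurable_const) simp

lemma pred_conj2: "Measurable.pred M P \<Longrightarrow> Measurable.pred M Q \<Longrightarrow> Measurable.pred M (\<lambda>x. P x \<and> Q x)"
  by (rule pred_intros_logic)

lemma pred_le_mu:
  "Measurable.pred (PiM L (\<lambda>_. borel)) (\<lambda>x. muhat ch ns (\<lambda>s t i. ext L x (s,t,i)) s B j \<le> muhat ch ns (\<lambda>s t i. ext L x (s,t,i)) s' B' j')"
  unfolding Measurable.pred_def by (intro borel_measurable_le meas_muhat)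

lemma pred_reach:
  "Measurable.pred (PiM L (\<lambda>_. borel)) (\<lambda>x. B \<in> reach ch v K ns (ext L x) k)"
proof (induction k arbitrary: B)
  case 0 then show ?case by (simp add: pred_const_bool)
next
  case (Suc k)
  show ?case
  proof (cases "finite B")
    case False
    then have "\<And>x. B \<notin> reach ch v K ns (ext L x) (Suc k)"
      using reach_subset by (metis finite_atLeastAtMost finite_subset)
    then have "(\<lambda>x. B \<in> reach ch v K ns (ext L x) (Suc k)) = (\<lambda>x. False)" by blast
    then show ?thesis by (simp only: pred_const_bool)
  next
    case True
  have eq: "(B \<in> reach ch v K ns (ext L x) (Suc k)) =
    (\<exists>C\<in>Pow {1..K}. C \<in> reach ch v K ns (ext L x) k \<and> (good v ns K C \<and> B \<subseteq> C \<and>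
      card B = (card C + 1) div 2) \<and>
      (\<forall>i\<in>B. \<forall>j\<in>C - B. muhat ch ns (\<lambda>s t i. ext L x (s,t,i)) (Suc k) C j
                          \<le> muhat ch ns (\<lambda>s t i. ext L x (s,t,i)) (Suc k) C i))" for x
  proof -
    have sub: "reach ch v K ns (ext L x) k \<subseteq> Pow {1..K}" using reach_subset by blast
    have gen: "\<And>R S P. R \<subseteq> Pow S \<Longrightarrow> (\<exists>C\<in>R. P C) = (\<exists>C\<in>Pow S. C \<in> R \<and> P C)" by blast
    show ?thesis unfolding reach.simps(2) mem_Collect_eq gen[OF sub] conj_assoc ..
  qed
  show ?thesis unfolding eq
    apply (rule pred_bex_fin, simp)
    apply (rule pred_conj2, rule Suc.IH)
    apply (rule pred_conj2, rule pred_const_bool)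
    apply (rule pred_ball_fin, rule True)
    apply (rule pred_ball_fin)
    apply (auto intro: finite_subset)[1]
    apply (rule pred_le_mu)
    done
  qed
qed

lemma pred_F:
  "Measurable.pred (PiM L (\<lambda>_. borel)) (\<lambda>x. \<exists>W\<in>Pow (B - {1}). c \<le> card W \<and>
       (\<forall>j\<in>W. muhat ch ns (\<lambda>s t i. ext L x (s,t,i)) s B 1 \<le> muhat ch ns (\<lambda>s t i. ext L x (s,t,i)) s B j))"
  if "finite B"
  apply (rule pred_bex_fin)
  using that apply simp
  apply (rule pred_conj2, rule pred_const_bool)
  apply (rule pred_ball_fin)
  using that apply (auto intro: finite_subset)[1]
  apply (rule pred_le_mu)
  done

lemma normal_density_shift_le:
  assumes "\<sigma> > 0" "\<mu> \<le> 0" "x \<ge> 0"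
  shows "normal_density \<mu> \<sigma> x \<le> exp (- (\<mu>\<^sup>2) / (2 * \<sigma>\<^sup>2)) * normal_density 0 \<sigma> x"
proof -
  have "- ((x - \<mu>)\<^sup>2) / (2 * \<sigma>\<^sup>2) \<le> - (\<mu>\<^sup>2) / (2 * \<sigma>\<^sup>2) + - ((x - 0)\<^sup>2) / (2 * \<sigma>\<^sup>2)"
  proof -
    have "(x - \<mu>)\<^sup>2 \<ge> \<mu>\<^sup>2 + x\<^sup>2" using assms mult_nonneg_nonpos[of x \<mu>]
      by (simp add: power2_eq_square algebra_simps)
    then show ?thesis using assms by (simp add: divide_simps)
  qed
  then have "exp (- ((x - \<mu>)\<^sup>2) / (2 * \<sigma>\<^sup>2)) \<le> exp (- (\<mu>\<^sup>2) / (2 * \<sigma>\<^sup>2)) * exp (- ((x - 0)\<^sup>2) / (2 * \<sigma>\<^sup>2))"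
    by (simp add: mult_exp_exp)
  then show ?thesis unfolding normal_density_def
    by (auto intro!: divide_right_mono)
qed

lemma (in prob_space) normal_tail:
  assumes D: "distributed M lborel D (normal_density \<mu> \<sigma>)" and s: "\<sigma> > 0" and m: "\<mu> \<le> 0"
  shows "prob {\<omega>\<in>space M. 0 \<le> D \<omega>} \<le> exp (- (\<mu>\<^sup>2) / (2 * \<sigma>\<^sup>2))"
proof -
  have eq: "{\<omega>\<in>space M. 0 \<le> D \<omega>} = D -` {0..} \<inter> space M" by auto
  have "emeasure M (D -` {0..} \<inter> space M) = (\<integral>\<^sup>+x. ennreal (normal_density \<mu> \<sigma> x) * indicator {0..} x \<partial>lborel)"
    by (rule distributed_emeasure[OF D]) simp
  also have "\<dots> \<le> (\<integral>\<^sup>+x. ennreal (exp (- (\<mu>\<^sup>2) / (2 * \<sigma>\<^sup>2))) * ennreal (normal_density 0 \<sigma> x) \<partial>lborel)"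
  proof (intro nn_integral_mono)
    fix x :: real
    show "ennreal (normal_density \<mu> \<sigma> x) * indicator {0..} x \<le> ennreal (exp (- (\<mu>\<^sup>2) / (2 * \<sigma>\<^sup>2))) * ennreal (normal_density 0 \<sigma> x)"
    proof (cases "x \<ge> 0")
      case True
      then show ?thesis using normal_density_shift_le[OF s m True]
        by (simp add: ennreal_mult'[symmetric] ennreal_leI)
    next
      case False then show ?thesis by simp
    qed
  qed
  also have "\<dots> = ennreal (exp (- (\<mu>\<^sup>2) / (2 * \<sigma>\<^sup>2))) * (\<integral>\<^sup>+x. ennreal (normal_density 0 \<sigma> x) \<partial>lborel)"
    by (rule nn_integral_cmult) simp
  also have "(\<integral>\<^sup>+x. ennreal (normal_density 0 \<sigma> x) \<partial>lborel) = 1"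
    using s by (subst nn_integral_eq_integral) (auto simp: integrable_normal_density)
  finally have "emeasure M (D -` {0..} \<inter> space M) \<le> ennreal (exp (- (\<mu>\<^sup>2) / (2 * \<sigma>\<^sup>2)))" by simp
  then show ?thesis unfolding eq by (simp add: emeasure_eq_measure)
qed

lemma (in prob_space) normal_zero:
  assumes D: "distributed M lborel D (normal_density \<mu> \<sigma>)"
  shows "prob {\<omega>\<in>space M. D \<omega> = 0} = 0"
proof -
  have eq: "{\<omega>\<in>space M. D \<omega> = 0} = D -` {0} \<inter> space M" by auto
  have "emeasure M (D -` {0} \<inter> space M) = (\<integral>\<^sup>+x. ennreal (normal_density \<mu> \<sigma> x) * indicator {0} x \<partial>lborel)"
    by (rule distributed_emeasure[OF D]) simp
  also have "\<dots> = (\<integral>\<^sup>+(x::real). 0 \<partial>lborel)"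
    by (rule nn_integral_cong_AE, rule eventually_mono[OF AE_lborel_singleton[of 0]]) simp
  finally show ?thesis unfolding eq by (simp add: emeasure_eq_measure)
qed

lemma (in prob_space) diff_avg_normal:
  fixes X :: "nat\<times>nat\<times>nat \<Rightarrow> 'a \<Rightarrow> real"
  assumes ind: "indep_vars (\<lambda>_. borel) X I"
    and gs: "\<And>t a. (s,t,a) \<in> I \<Longrightarrow> distributed M lborel (X (s,t,a)) (normal_density (\<mu> a) (\<sigma> a))"
    and si: "\<sigma> i > 0" and sj: "\<sigma> j > 0" and ij: "i \<noteq> j"
    and Ti: "finite Ti" "Ti \<noteq> {}" "(\<lambda>t. (s,t,i)) ` Ti \<subseteq> I"
    and Tj: "finite Tj" "Tj \<noteq> {}" "(\<lambda>t. (s,t,j)) ` Tj \<subseteq> I"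
  shows "distributed M lborel (\<lambda>\<omega>. (\<Sum>t\<in>Ti. X (s,t,i) \<omega>) / real (card Ti) - (\<Sum>t\<in>Tj. X (s,t,j) \<omega>) / real (card Tj))
         (normal_density (\<mu> i - \<mu> j) (sqrt ((\<sigma> i)\<^sup>2 / real (card Ti) + (\<sigma> j)\<^sup>2 / real (card Tj))))"
proof -
  define J1 where "J1 = (\<lambda>t. (s,t,i)) ` Ti"
  define J2 where "J2 = (\<lambda>t. (s,t,j)) ` Tj"
  define J where "J = J1 \<union> J2"
  define c where "c idx = (if idx \<in> J1 then 1 / real (card Ti) else - 1 / real (card Tj))" for idx
  define a where "a idx = snd (snd idx)" for idx :: "nat\<times>nat\<times>nat"
  have cTi: "real (card Ti) > 0" and cTj: "real (card Tj) > 0" using Ti Tj by auto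
  have disj: "J1 \<inter> J2 = {}" using ij unfolding J1_def J2_def by auto
  have finJ: "finite J" "J \<noteq> {}" using Ti Tj unfolding J_def J1_def J2_def by auto
  have JI: "J \<subseteq> I" using Ti Tj unfolding J_def J1_def J2_def by auto
  have c0: "c idx \<noteq> 0" for idx using cTi cTj unfolding c_def by auto
  have aJ1: "a idx = i" if "idx \<in> J1" for idx using that unfolding J1_def a_def by auto
  have aJ2: "a idx = j" if "idx \<in> J2" for idx using that unfolding J2_def a_def by auto
  have sa: "\<sigma> (a idx) > 0" if "idx \<in> J" for idx using that si sj unfolding J_def J1_def J2_def a_def by auto
  have indZ: "indep_vars (\<lambda>_. borel) (\<lambda>idx \<omega>. c idx * X idx \<omega>) J"
    by (rule indep_vars_compose2[OF indep_vars_subset[OF ind JI]]) simp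
  have distZ: "distributed M lborel (\<lambda>\<omega>. c idx * X idx \<omega>) (normal_density (c idx * \<mu> (a idx)) (\<bar>c idx\<bar> * \<sigma> (a idx)))"
    if "idx \<in> J" for idx
  proof -
    from that have "\<exists>t b. idx = (s,t,b)" unfolding J_def J1_def J2_def by auto
    then obtain t b where idx: "idx = (s,t,b)" by blast
    have X: "distributed M lborel (X idx) (normal_density (\<mu> (a idx)) (\<sigma> (a idx)))"
      using gs[of t b] that JI idx unfolding a_def by auto
    show ?thesis using normal_density_affine[OF X sa[OF that] c0[of idx], of 0] by simp
  qed
  have S: "distributed M lborel (\<lambda>\<omega>. \<Sum>idx\<in>J. c idx * X idx \<omega>)
      (normal_density (\<Sum>idx\<in>J. c idx * \<mu> (a idx)) (sqrt (\<Sum>idx\<in>J. (\<bar>c idx\<bar> * \<sigma> (a idx))\<^sup>2)))"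
    using sum_indep_normal[OF finJ indZ, of "\<lambda>idx. \<bar>c idx\<bar> * \<sigma> (a idx)" "\<lambda>idx. c idx * \<mu> (a idx)"]
      distZ sa c0 by simp
  have inj1: "inj_on (\<lambda>t. (s,t,i)) Ti" and inj2: "inj_on (\<lambda>t. (s,t,j)) Tj" by (auto simp: inj_on_def)
  have gen: "(\<Sum>idx\<in>J. g idx) = (\<Sum>t\<in>Ti. g (s,t,i)) + (\<Sum>t\<in>Tj. g (s,t,j))" for g :: "_ \<Rightarrow> real"
    unfolding J_def using sum.union_disjoint[of J1 J2 g] disj Ti Tj
    by (simp add: J1_def J2_def sum.reindex[OF inj1] sum.reindex[OF inj2])
  have cJ1: "c (s,t,i) = 1 / real (card Ti)" if "t \<in> Ti" for t using that unfolding c_def J1_def by auto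
  have cJ2: "c (s,t,j) = - 1 / real (card Tj)" if "t \<in> Tj" for t
    using that ij unfolding c_def J1_def by auto
  have e1: "(\<Sum>idx\<in>J. c idx * X idx \<omega>) = (\<Sum>t\<in>Ti. X (s,t,i) \<omega>) / real (card Ti) - (\<Sum>t\<in>Tj. X (s,t,j) \<omega>) / real (card Tj)" for \<omega>
    unfolding gen using cJ1 cJ2
    by (simp add: sum_divide_distrib sum_negf[symmetric] cong: sum.cong)
  have e2: "(\<Sum>idx\<in>J. c idx * \<mu> (a idx)) = \<mu> i - \<mu> j"
    unfolding gen using cJ1 cJ2 cTi cTj by (simp add: a_def cong: sum.cong)
  have e3: "(\<Sum>idx\<in>J. (\<bar>c idx\<bar> * \<sigma> (a idx))\<^sup>2) = (\<sigma> i)\<^sup>2 / real (card Ti) + (\<sigma> j)\<^sup>2 / real (card Tj)"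
    unfolding gen using cJ1 cJ2 cTi cTj by (simp add: a_def power2_eq_square cong: sum.cong)
  show ?thesis using S unfolding e1 e2 e3 .
qed

lemma exists_step: "P (0::nat) \<Longrightarrow> \<not> P m \<Longrightarrow> \<exists>s<m. P s \<and> \<not> P (Suc s)"
proof (induction m)
  case 0 then show ?case by simp
next
  case (Suc m)
  show ?case
  proof (cases "P m")
    case True then show ?thesis using Suc by auto
  next
    case False
    with Suc obtain s where "s < m" "P s" "\<not> P (Suc s)" by auto
    then show ?thesis by (intro exI[of _ s]) auto
  qed
qed

lemma sum_if_le1:
  assumes "finite A" "\<And>a b. a \<in> A \<Longrightarrow> b \<in> A \<Longrightarrow> P a \<Longrightarrow> P b \<Longrightarrow> a = b"
  shows "(\<Sum>a\<in>A. if P a then 1 else 0) \<le> (1::real)"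
proof -
  have "(\<Sum>a\<in>A. if P a then 1 else 0) = real (card {a\<in>A. P a})"
    using assms(1) by (simp add: sum.If_cases Int_def)
  moreover have "card {a\<in>A. P a} \<le> Suc 0"
    using assms by (subst card_le_Suc0_iff_eq) auto
  ultimately show ?thesis by simp
qed

locale shv = prob_space M for M :: "'a measure" +
  fixes Y :: "nat \<Rightarrow> nat \<Rightarrow> nat \<Rightarrow> 'a \<Rightarrow> real"
    and \<mu> \<sigma> :: "nat \<Rightarrow> real"
    and K m ns n :: nat
    and ch :: "nat set \<Rightarrow> (nat \<Rightarrow> nat) \<Rightarrow> nat"
    and sel :: "nat set \<Rightarrow> (nat \<Rightarrow> real) \<Rightarrow> nat set"
  assumes K: "K = 2 ^ m" and m: "m \<ge> 1"
    and n: "n = m * ns"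
    and sig: "\<forall>i\<in>{1..K}. \<sigma> i > 0"
    and gap: "\<mu> 1 > \<mu> 2"
    and sorted: "\<forall>i\<in>{2..<K}. \<mu> i \<ge> \<mu> (i + 1)"
    and indep: "indep_vars (\<lambda>_. borel) (\<lambda>(s, t, i). Y s t i) ({1..m} \<times> {1..ns} \<times> {1..K})"
    and gauss: "\<forall>s\<in>{1..m}. \<forall>t\<in>{1..ns}. \<forall>i\<in>{1..K}.
                  distributed M lborel (Y s t i) (normal_density (\<mu> i) (\<sigma> i))"
    and rule: "is_var_rule (\<lambda>i. (\<sigma> i)\<^sup>2) ch"
    and halving: "is_halving_rule sel"
    and integral_alloc: "\<forall>\<omega>\<in>space M. \<forall>s\<in>{1..m}.
           let A = sh_set ch sel K ns (\<lambda>s t i. Y s t i \<omega>) (s - 1) in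
           \<forall>i\<in>A. (\<sigma> i)\<^sup>2 * real ns / (\<Sum>j\<in>A. (\<sigma> j)\<^sup>2) \<in> \<int>"
    and nspos: "ns > 0"
begin

abbreviation "v \<equiv> (\<lambda>i. (\<sigma> i)\<^sup>2)"
abbreviation "Stot \<equiv> (\<Sum>j\<in>{1..K}. (\<sigma> j)\<^sup>2)"
abbreviation "ee \<equiv> exp (- (real ns * (\<mu> 1 - \<mu> 2)\<^sup>2) / (4 * Stot))"
abbreviation "mh \<omega> s B j \<equiv> muhat ch ns (\<lambda>s t i. Y s t i \<omega>) s B j"
abbreviation "xw \<omega> \<equiv> (\<lambda>(s,t,i). Y s t i \<omega>)"

lemma K2: "K \<ge> 2" using K m by (metis one_le_numeral power_increasing power_one_right)

lemma v_pos: "i \<in> {1..K} \<Longrightarrow> (\<sigma> i)\<^sup>2 > 0" using sig by force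

lemma mu_le: "j \<in> {1..K} \<Longrightarrow> j \<noteq> 1 \<Longrightarrow> \<mu> j \<le> \<mu> 2"
proof -
  have "\<forall>j. 2 \<le> j \<longrightarrow> j \<le> K \<longrightarrow> \<mu> j \<le> \<mu> 2"
  proof
    fix j show "2 \<le> j \<longrightarrow> j \<le> K \<longrightarrow> \<mu> j \<le> \<mu> 2"
    proof (induction j)
      case 0 then show ?case by simp
    next
      case (Suc j)
      show ?case
      proof (cases "Suc j = 2")
        case True then show ?thesis by (simp add: numeral_2_eq_2)
      next
        case False
        show ?thesis
        proof (intro impI)
          assume a: "2 \<le> Suc j" "Suc j \<le> K"
          then have j2: "2 \<le> j" using False by simp
          have "j \<in> {2..<K}" using a j2 by simp
          then have "\<mu> (Suc j) \<le> \<mu> j" using sorted by simp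
          also have "\<mu> j \<le> \<mu> 2" using Suc.IH j2 a by simp
          finally show "\<mu> (Suc j) \<le> \<mu> 2" .
        qed
      qed
    qed
  qed
  then show "j \<in> {1..K} \<Longrightarrow> j \<noteq> 1 \<Longrightarrow> \<mu> j \<le> \<mu> 2" by simp
qed

lemma T_card:
  assumes "good v ns K B" "j \<in> B"
  shows "real (card {t\<in>{1..ns}. pull ch B t = j}) = (\<sigma> j)\<^sup>2 * real ns / (\<Sum>i\<in>B. (\<sigma> i)\<^sup>2)"
proof -
  have vp: "\<forall>i\<in>B. v i > 0" using assms(1) v_pos unfolding good_def by auto
  show ?thesis using cnt_eq[OF rule assms(1) vp assms(2)] cnt_card[of ch B ns j] by simp
qed

lemma D_dist:
  assumes "s \<in> {1..m}" "good v ns K B" "i \<in> B" "j \<in> B" "i \<noteq> j"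
  shows "distributed M lborel (\<lambda>\<omega>. mh \<omega> s B i - mh \<omega> s B j)
     (normal_density (\<mu> i - \<mu> j) (sqrt (2 * (\<Sum>i\<in>B. (\<sigma> i)\<^sup>2) / real ns)))"
proof -
  define Ti where "Ti = {t\<in>{1..ns}. pull ch B t = i}"
  define Tj where "Tj = {t\<in>{1..ns}. pull ch B t = j}"
  define S where "S = (\<Sum>i\<in>B. (\<sigma> i)\<^sup>2)"
  have BK: "B \<subseteq> {1..K}" "finite B" "B \<noteq> {}" using assms(2) unfolding good_def by (auto intro: finite_subset)
  have Spos: "S > 0" unfolding S_def using BK v_pos by (intro sum_pos) auto
  have si: "\<sigma> i > 0" "\<sigma> j > 0" using sig BK assms(3,4) by auto
  have ci: "real (card Ti) = (\<sigma> i)\<^sup>2 * real ns / S" unfolding Ti_def S_def using T_card[OF assms(2,3)] .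
  have cj: "real (card Tj) = (\<sigma> j)\<^sup>2 * real ns / S" unfolding Tj_def S_def using T_card[OF assms(2,4)] .
  have cip: "real (card Ti) > 0" "real (card Tj) > 0" using ci cj si Spos nspos by simp_all
  have c0: "card Ti > 0" "card Tj > 0" using cip by simp_all
  have Ti: "finite Ti" "Ti \<noteq> {}" "(\<lambda>t. (s,t,i)) ` Ti \<subseteq> {1..m} \<times> {1..ns} \<times> {1..K}"
    using c0 assms(1,3) BK unfolding Ti_def by (auto simp: card_gt_0_iff)
  have Tj: "finite Tj" "Tj \<noteq> {}" "(\<lambda>t. (s,t,j)) ` Tj \<subseteq> {1..m} \<times> {1..ns} \<times> {1..K}"
    using c0 assms(1,4) BK unfolding Tj_def by (auto simp: card_gt_0_iff)
  have gs: "distributed M lborel ((\<lambda>(s, t, i). Y s t i) (s,t,a)) (normal_density (\<mu> a) (\<sigma> a))"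
    if "(s,t,a) \<in> {1..m} \<times> {1..ns} \<times> {1..K}" for t a
    using gauss that by simp
  have D: "distributed M lborel (\<lambda>\<omega>. (\<Sum>t\<in>Ti. (\<lambda>(s, t, i). Y s t i) (s,t,i) \<omega>) / real (card Ti)
        - (\<Sum>t\<in>Tj. (\<lambda>(s, t, i). Y s t i) (s,t,j) \<omega>) / real (card Tj))
         (normal_density (\<mu> i - \<mu> j) (sqrt ((\<sigma> i)\<^sup>2 / real (card Ti) + (\<sigma> j)\<^sup>2 / real (card Tj))))"
    by (rule diff_avg_normal[OF indep gs si assms(5) Ti Tj])
  have e1a: "(\<sigma> i)\<^sup>2 / real (card Ti) = S / real ns"
    unfolding ci using si Spos nspos by (simp add: field_simps)
  have e1b: "(\<sigma> j)\<^sup>2 / real (card Tj) = S / real ns"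
    unfolding cj using si Spos nspos by (simp add: field_simps)
  have e1: "(\<sigma> i)\<^sup>2 / real (card Ti) + (\<sigma> j)\<^sup>2 / real (card Tj) = 2 * S / real ns"
    unfolding e1a e1b by simp
  show ?thesis using D unfolding e1 S_def[symmetric] by (simp add: muhat_def Ti_def Tj_def)
qed

lemma tail:
  assumes "s \<in> {1..m}" "good v ns K B" "1 \<in> B" "j \<in> B - {1}"
  shows "prob {\<omega>\<in>space M. mh \<omega> s B 1 \<le> mh \<omega> s B j} \<le> ee"
proof -
  define S where "S = (\<Sum>i\<in>B. (\<sigma> i)\<^sup>2)"
  have BK: "B \<subseteq> {1..K}" "finite B" "B \<noteq> {}" using assms(2) unfolding good_def by (auto intro: finite_subset)
  have Spos: "S > 0" unfolding S_def using BK v_pos by (intro sum_pos) auto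
  have SS: "S \<le> Stot" unfolding S_def using BK by (intro sum_mono2) auto
  have j: "j \<in> B" "j \<noteq> 1" using assms(4) by auto
  have D: "distributed M lborel (\<lambda>\<omega>. mh \<omega> s B j - mh \<omega> s B 1)
     (normal_density (\<mu> j - \<mu> 1) (sqrt (2 * S / real ns)))"
    unfolding S_def using D_dist[OF assms(1,2) j(1) assms(3) j(2)] .
  have sp: "sqrt (2 * S / real ns) > 0" using Spos nspos by simp
  have mj: "\<mu> j \<le> \<mu> 2" using mu_le j BK by auto
  have neg: "\<mu> j - \<mu> 1 \<le> 0" using mj gap by simp
  have "prob {\<omega>\<in>space M. 0 \<le> mh \<omega> s B j - mh \<omega> s B 1} \<le> exp (- ((\<mu> j - \<mu> 1)\<^sup>2) / (2 * (sqrt (2 * S / real ns))\<^sup>2))"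
    by (rule normal_tail[OF D sp neg])
  also have "(2 * (sqrt (2 * S / real ns))\<^sup>2) = 4 * S / real ns" using Spos nspos by simp
  also have "- ((\<mu> j - \<mu> 1)\<^sup>2) / (4 * S / real ns) \<le> - (real ns * (\<mu> 1 - \<mu> 2)\<^sup>2) / (4 * Stot)"
  proof -
    have d: "(\<mu> 1 - \<mu> 2)\<^sup>2 \<le> (\<mu> j - \<mu> 1)\<^sup>2"
    proof -
      have "0 \<le> \<mu> 1 - \<mu> 2" "\<mu> 1 - \<mu> 2 \<le> \<mu> 1 - \<mu> j" using gap mj by auto
      then have "(\<mu> 1 - \<mu> 2)\<^sup>2 \<le> (\<mu> 1 - \<mu> j)\<^sup>2" by (intro power_mono) auto
      then show ?thesis by (simp add: power2_commute)
    qed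
    have "real ns * (\<mu> 1 - \<mu> 2)\<^sup>2 / (4 * Stot) \<le> real ns * (\<mu> j - \<mu> 1)\<^sup>2 / (4 * S)"
      using d Spos SS by (intro frac_le mult_left_mono) auto
    then show ?thesis using nspos Spos by (simp add: field_simps)
  qed
  then have "exp (- ((\<mu> j - \<mu> 1)\<^sup>2) / (4 * S / real ns)) \<le> ee" by simp
  finally show ?thesis by simp
qed

end

context shv begin

abbreviation "X \<equiv> (\<lambda>(s, t, i). Y s t i)"
abbreviation "II \<equiv> {1..m} \<times> {1..ns} \<times> {1..K}"
abbreviation "Lk k \<equiv> {1..k} \<times> {1..ns} \<times> {1..K}"
abbreviation "Ls s \<equiv> {s} \<times> {1..ns} \<times> {1..K}"
abbreviation "Rk k B \<equiv> {\<omega>\<in>space M. B \<in> reach ch v K ns (xw \<omega>) k}"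
abbreviation "Fs s B \<equiv> {\<omega>\<in>space M. \<exists>W\<in>Pow (B - {1}). (card B + 1) div 2 \<le> card W \<and>
                     (\<forall>j\<in>W. mh \<omega> s B 1 \<le> mh \<omega> s B j)}"
abbreviation "rr L \<omega> \<equiv> restrict (\<lambda>idx. X idx \<omega>) L"

lemma X_meas: "idx \<in> II \<Longrightarrow> X idx \<in> borel_measurable M"
  using indep unfolding indep_vars_def by auto

lemma rr_meas: "L \<subseteq> II \<Longrightarrow> rr L \<in> measurable M (PiM L (\<lambda>_. borel))"
  using X_meas by (intro measurable_restrict) auto

lemma Rk_repr:
  assumes "k \<le> m"
  shows "Rk k B = rr (Lk k) -` {x\<in>space (PiM (Lk k) (\<lambda>_. borel)). B \<in> reach ch v K ns (ext (Lk k) x) k} \<inter> space M"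
proof -
  have sub: "Lk k \<subseteq> II" using assms by auto
  have "reach ch v K ns (ext (Lk k) (rr (Lk k) \<omega>)) k = reach ch v K ns (xw \<omega>) k" for \<omega>
    by (rule reach_cong) (auto simp: ext_def)
  moreover have "\<omega> \<in> space M \<Longrightarrow> rr (Lk k) \<omega> \<in> space (PiM (Lk k) (\<lambda>_. borel))" for \<omega>
    using measurable_space[OF rr_meas[OF sub]] by blast
  ultimately show ?thesis by auto
qed

lemma Rk_sets: "k \<le> m \<Longrightarrow> Rk k B \<in> sets M"
proof -
  assume k: "k \<le> m"
  have sub: "Lk k \<subseteq> II" using k by auto
  have "{x\<in>space (PiM (Lk k) (\<lambda>_. borel)). B \<in> reach ch v K ns (ext (Lk k) x) k} \<in> sets (PiM (Lk k) (\<lambda>_. borel))"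
    using pred_reach unfolding Measurable.pred_def .
  then show ?thesis unfolding Rk_repr[OF k] by (rule measurable_sets[OF rr_meas[OF sub]])
qed

lemma Fs_repr:
  assumes "s \<in> {1..m}" "good v ns K B"
  shows "Fs s B = rr (Ls s) -` {x\<in>space (PiM (Ls s) (\<lambda>_. borel)). \<exists>W\<in>Pow (B - {1}). (card B + 1) div 2 \<le> card W \<and>
       (\<forall>j\<in>W. muhat ch ns (\<lambda>a b c. ext (Ls s) x (a,b,c)) s B 1 \<le> muhat ch ns (\<lambda>a b c. ext (Ls s) x (a,b,c)) s B j)} \<inter> space M"
proof -
  have sub: "Ls s \<subseteq> II" using assms by auto
  have BK: "B \<subseteq> {1..K}" using assms(2) by (simp add: good_def)
  have K1: "1 \<le> K" using K2 by simp
  have mu: "muhat ch ns (\<lambda>a b c. ext (Ls s) (rr (Ls s) \<omega>) (a,b,c)) s B j = mh \<omega> s B j" if "j \<in> {1..K}" for \<omega> j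
    using that by (intro muhat_cong) (auto simp: ext_def)
  have eq: "(\<exists>W\<in>Pow (B - {1}). (card B + 1) div 2 \<le> card W \<and>
       (\<forall>j\<in>W. muhat ch ns (\<lambda>a b c. ext (Ls s) (rr (Ls s) \<omega>) (a,b,c)) s B 1 \<le> muhat ch ns (\<lambda>a b c. ext (Ls s) (rr (Ls s) \<omega>) (a,b,c)) s B j))
     = (\<exists>W\<in>Pow (B - {1}). (card B + 1) div 2 \<le> card W \<and> (\<forall>j\<in>W. mh \<omega> s B 1 \<le> mh \<omega> s B j))" for \<omega>
  proof (intro bex_cong refl conj_cong ball_cong)
    fix W j assume "W \<in> Pow (B - {1})" "j \<in> W"
    then have "j \<in> {1..K}" using BK by auto
    then show "(muhat ch ns (\<lambda>a b c. ext (Ls s) (rr (Ls s) \<omega>) (a,b,c)) s B 1 \<le> muhat ch ns (\<lambda>a b c. ext (Ls s) (rr (Ls s) \<omega>) (a,b,c)) s B j)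
       = (mh \<omega> s B 1 \<le> mh \<omega> s B j)" using mu[of j \<omega>] mu[of 1 \<omega>] K1 by simp
  qed
  have "\<omega> \<in> space M \<Longrightarrow> rr (Ls s) \<omega> \<in> space (PiM (Ls s) (\<lambda>_. borel))" for \<omega>
    using measurable_space[OF rr_meas[OF sub]] by blast
  then show ?thesis using eq by auto
qed

lemma Fs_sets:
  assumes "s \<in> {1..m}" "good v ns K B"
  shows "Fs s B \<in> sets M"
proof -
  have sub: "Ls s \<subseteq> II" using assms by auto
  have fin: "finite B" using assms(2) by (auto simp: good_def intro: finite_subset)
  show ?thesis unfolding Fs_repr[OF assms]
    by (rule measurable_sets[OF rr_meas[OF sub]]) (rule pred_F[OF fin, unfolded Measurable.pred_def])
qed

lemma prod_RF:
  assumes "s \<in> {1..m}" "good v ns K B"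
  shows "prob (Rk (s - 1) B \<inter> Fs s B) = prob (Rk (s - 1) B) * prob (Fs s B)"
proof -
  have sub1: "Lk (s - 1) \<subseteq> II" and sub2: "Ls s \<subseteq> II" and disj: "Lk (s - 1) \<inter> Ls s = {}"
    using assms(1) by auto
  have fin: "finite B" using assms(2) by (auto simp: good_def intro: finite_subset)
  have iv: "indep_var (PiM (Lk (s - 1)) (\<lambda>_. borel)) (rr (Lk (s - 1))) (PiM (Ls s) (\<lambda>_. borel)) (rr (Ls s))"
    by (rule indep_var_restrict[OF indep disj sub1 sub2])
  let ?S1 = "{x\<in>space (PiM (Lk (s - 1)) (\<lambda>_. borel)). B \<in> reach ch v K ns (ext (Lk (s - 1)) x) (s - 1)}"
  let ?S2 = "{x\<in>space (PiM (Ls s) (\<lambda>_. borel)). \<exists>W\<in>Pow (B - {1}). (card B + 1) div 2 \<le> card W \<and>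
       (\<forall>j\<in>W. muhat ch ns (\<lambda>a b c. ext (Ls s) x (a,b,c)) s B 1 \<le> muhat ch ns (\<lambda>a b c. ext (Ls s) x (a,b,c)) s B j)}"
  have S1: "?S1 \<in> sets (PiM (Lk (s - 1)) (\<lambda>_. borel))"
    using pred_reach unfolding Measurable.pred_def .
  have S2: "?S2 \<in> sets (PiM (Ls s) (\<lambda>_. borel))"
    by (rule pred_F[OF fin, unfolded Measurable.pred_def])
  have k: "s - 1 \<le> m" using assms(1) by (metis atLeastAtMost_iff diff_le_self le_trans)
  have "(\<lambda>x. (rr (Lk (s - 1)) x, rr (Ls s) x)) -` (?S1 \<times> ?S2) \<inter> space M = Rk (s - 1) B \<inter> Fs s B"
    unfolding Rk_repr[OF k] Fs_repr[OF assms] by auto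
  then show ?thesis using indep_varD[OF iv S1 S2]
    unfolding Rk_repr[OF k, symmetric] Fs_repr[OF assms, symmetric] by simp
qed

end

context shv begin

lemma AE_neq:
  assumes "s \<in> {1..m}" "good v ns K B" "i \<in> B" "j \<in> B" "i \<noteq> j"
  shows "AE \<omega> in M. mh \<omega> s B i \<noteq> mh \<omega> s B j"
proof -
  let ?D = "\<lambda>\<omega>. mh \<omega> s B i - mh \<omega> s B j"
  have D: "distributed M lborel ?D (normal_density (\<mu> i - \<mu> j) (sqrt (2 * (\<Sum>i\<in>B. (\<sigma> i)\<^sup>2) / real ns)))"
    by (rule D_dist[OF assms])
  have meas: "?D \<in> borel_measurable M" using distributed_measurable[OF D] by simp
  have set: "{\<omega>\<in>space M. ?D \<omega> = 0} \<in> sets M" using meas by measurable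
  have "prob {\<omega>\<in>space M. ?D \<omega> = 0} = 0" by (rule normal_zero[OF D])
  then have "{\<omega>\<in>space M. ?D \<omega> = 0} \<in> null_sets M" using set
    by (simp add: emeasure_eq_measure null_sets_def)
  then show ?thesis by (rule AE_I') auto
qed

lemma AE_tiefree: "AE \<omega> in M. tiefree ch v K ns (xw \<omega>) m"
proof -
  have "AE \<omega> in M. \<forall>s\<in>{1..m}. \<forall>B\<in>{B\<in>Pow {1..K}. good v ns K B}. \<forall>i\<in>B. \<forall>j\<in>B - {i}. mh \<omega> s B i \<noteq> mh \<omega> s B j"
  proof (intro AE_finite_allI)
    fix s B i j assume "s \<in> {1..m}" "B \<in> {B\<in>Pow {1..K}. good v ns K B}" "i \<in> B" "j \<in> B - {i}"
    then show "AE \<omega> in M. mh \<omega> s B i \<noteq> mh \<omega> s B j" using AE_neq by auto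
  qed (auto intro: finite_subset)
  then show ?thesis
    by (rule eventually_mono) (auto simp: tiefree_def)
qed

lemma sumR:
  assumes "k \<le> m" "BB \<subseteq> Pow {1..K}"
  shows "(\<Sum>B\<in>BB. prob (Rk k B)) \<le> 1"
proof -
  have finBB: "finite BB" using assms(2) finite_subset by (metis finite_Pow_iff finite_atLeastAtMost)
  have sets: "Rk k B \<in> sets M" for B using Rk_sets[OF assms(1)] .
  have int: "integrable M (indicator (Rk k B) :: 'a \<Rightarrow> real)" for B
    using sets by (intro integrable_real_indicator) (auto simp: emeasure_eq_measure)
  have "(\<Sum>B\<in>BB. prob (Rk k B)) = (\<Sum>B\<in>BB. integral\<^sup>L M (indicator (Rk k B) :: 'a \<Rightarrow> real))"
    by (intro sum.cong refl) (simp add: Int_absorb2)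
  also have "\<dots> = integral\<^sup>L M (\<lambda>\<omega>. \<Sum>B\<in>BB. indicator (Rk k B) \<omega> :: real)"
    by (rule Bochner_Integration.integral_sum[symmetric]) (rule int)
  also have "\<dots> \<le> integral\<^sup>L M (\<lambda>\<omega>. 1)"
  proof (rule integral_mono_AE)
    show "integrable M (\<lambda>\<omega>. \<Sum>B\<in>BB. indicator (Rk k B) \<omega> :: real)" using int by auto
    show "integrable M (\<lambda>\<omega>. 1::real)" by simp
    show "AE \<omega> in M. (\<Sum>B\<in>BB. indicator (Rk k B) \<omega> :: real) \<le> 1"
      using AE_tiefree AE_space
    proof eventually_elim
      case (elim \<omega>)
      have tf: "tiefree ch v K ns (xw \<omega>) k" using elim assms(1) by (auto simp: tiefree_def)
      have "(\<Sum>B\<in>BB. indicator (Rk k B) \<omega> :: real) = (\<Sum>B\<in>BB. if B \<in> reach ch v K ns (xw \<omega>) k then 1 else 0)"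
        using elim by (intro sum.cong refl) (auto simp: indicator_def)
      also have "\<dots> \<le> 1"
        by (rule sum_if_le1[OF finBB]) (rule reach_unique[OF tf])
      finally show ?case .
    qed
  qed
  also have "\<dots> = 1" by (simp add: prob_space)
  finally show ?thesis .
qed

lemma Fbound:
  assumes s: "s \<in> {1..m}" and g: "good v ns K B" and one: "1 \<in> B"
  shows "prob (Fs s B) \<le> 2 * ee"
proof -
  define c where "c = (card B + 1) div 2"
  have BK: "B \<subseteq> {1..K}" "finite B" "B \<noteq> {}" using g unfolding good_def by (auto intro: finite_subset)
  have cB: "card B \<ge> 1" using BK by (simp add: Suc_le_eq card_gt_0_iff)
  have c1: "c \<ge> 1" unfolding c_def using cB by simp
  have c2: "real (card B) - 1 \<le> 2 * real c" unfolding c_def by linarith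
  define P where "P j = {\<omega>\<in>space M. mh \<omega> s B 1 \<le> mh \<omega> s B j}" for j
  have Psets: "P j \<in> sets M" if "j \<in> B - {1}" for j
  proof -
    have D: "distributed M lborel (\<lambda>\<omega>. mh \<omega> s B j - mh \<omega> s B 1) (normal_density (\<mu> j - \<mu> 1) (sqrt (2 * (\<Sum>i\<in>B. (\<sigma> i)\<^sup>2) / real ns)))"
      using that one by (intro D_dist[OF s g]) auto
    have meas: "(\<lambda>\<omega>. mh \<omega> s B j - mh \<omega> s B 1) \<in> borel_measurable M" using distributed_measurable[OF D] by simp
    have "{\<omega>\<in>space M. 0 \<le> mh \<omega> s B j - mh \<omega> s B 1} \<in> sets M" using meas by measurable
    moreover have "{\<omega>\<in>space M. 0 \<le> mh \<omega> s B j - mh \<omega> s B 1} = P j" unfolding P_def by auto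
    ultimately show ?thesis by simp
  qed
  have Pb: "prob (P j) \<le> ee" if "j \<in> B - {1}" for j
    unfolding P_def by (rule tail[OF s g one that])
  have Fsets: "Fs s B \<in> sets M" by (rule Fs_sets[OF s g])
  have intP: "integrable M (indicator (P j) :: 'a \<Rightarrow> real)" if "j \<in> B - {1}" for j
    using Psets[OF that] by (intro integrable_real_indicator) (auto simp: emeasure_eq_measure)
  have intF: "integrable M (indicator (Fs s B) :: 'a \<Rightarrow> real)"
    using Fsets by (intro integrable_real_indicator) (auto simp: emeasure_eq_measure)
  have pw: "real c * indicator (Fs s B) \<omega> \<le> (\<Sum>j\<in>B - {1}. indicator (P j) \<omega> :: real)" for \<omega>
  proof (cases "\<omega> \<in> Fs s B")
    case True
    then obtain W where W: "W \<subseteq> B - {1}" "c \<le> card W" "\<forall>j\<in>W. mh \<omega> s B 1 \<le> mh \<omega> s B j" "\<omega> \<in> space M"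
      unfolding c_def by auto
    have WP: "W \<subseteq> {j\<in>B - {1}. \<omega> \<in> P j}" using W unfolding P_def by auto
    have "(\<Sum>j\<in>B - {1}. indicator (P j) \<omega> :: real) = real (card {j\<in>B - {1}. \<omega> \<in> P j})"
      using BK by (simp add: indicator_def sum.If_cases Int_def)
    moreover have "card W \<le> card {j\<in>B - {1}. \<omega> \<in> P j}" using WP BK by (intro card_mono) auto
    ultimately show ?thesis using True W(2) by simp
  next
    case False then show ?thesis by (simp add: sum_nonneg)
  qed
  have "real c * prob (Fs s B) = integral\<^sup>L M (\<lambda>\<omega>. real c * indicator (Fs s B) \<omega>)"
    using Fsets by simp
  also have "\<dots> \<le> integral\<^sup>L M (\<lambda>\<omega>. \<Sum>j\<in>B - {1}. indicator (P j) \<omega> :: real)"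
    using pw intF intP by (intro integral_mono Bochner_Integration.integrable_sum) auto
  also have "\<dots> = (\<Sum>j\<in>B - {1}. prob (P j))"
    using intP Psets by (subst Bochner_Integration.integral_sum) (auto simp: Int_absorb2 P_def)
  also have "\<dots> \<le> (\<Sum>j\<in>B - {1}. ee)" using Pb by (rule sum_mono)
  also have "\<dots> = (real (card B) - 1) * ee" using BK one cB by (simp add: card_Diff_singleton of_nat_diff)
  also have "\<dots> \<le> 2 * real c * ee" using c2 by (intro mult_right_mono) auto
  finally have "real c * prob (Fs s B) \<le> real c * (2 * ee)" by simp
  then show ?thesis using c1 by simp
qed

end

context shv begin

abbreviation "BB \<equiv> {B\<in>Pow {1..K}. good v ns K B \<and> 1 \<in> B}"

lemma cover:
  "{\<omega>\<in>space M. sh_out ch sel K m ns (\<lambda>s t i. Y s t i \<omega>) \<noteq> 1}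
     \<subseteq> (\<Union>s\<in>{1..m}. \<Union>B\<in>BB. Rk (s - 1) B \<inter> Fs s B)"
proof
  fix \<omega> assume "\<omega> \<in> {\<omega>\<in>space M. sh_out ch sel K m ns (\<lambda>s t i. Y s t i \<omega>) \<noteq> 1}"
  then have om: "\<omega> \<in> space M" and out: "sh_out ch sel K m ns (\<lambda>s t i. Y s t i \<omega>) \<noteq> 1" by auto
  define A where "A k = sh_set ch sel K ns (\<lambda>s t i. Y s t i \<omega>) k" for k
  have cA: "A k \<subseteq> {1..K} \<and> card (A k) = 2 ^ (m - k)" if "k \<le> m" for k
    unfolding A_def by (rule card_sh_set[OF halving that K])
  obtain x where x: "A m = {x}" using cA[of m] by (auto simp: card_1_singleton_iff)
  have "x \<noteq> 1" using out x unfolding sh_out_def A_def by simp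
  then have n1: "1 \<notin> A m" using x by simp
  have y1: "1 \<in> A 0" using K2 unfolding A_def by simp
  obtain s0 where s0: "s0 < m" "1 \<in> A s0" "1 \<notin> A (Suc s0)"
    using exists_step[of "\<lambda>k. 1 \<in> A k", OF y1 n1] by blast
  define B where "B = A s0"
  have s: "Suc s0 \<in> {1..m}" using s0 by simp
  have cB: "B \<subseteq> {1..K}" "card B = 2 ^ (m - s0)" using cA[of s0] s0 unfolding B_def by auto
  have finB: "finite B" using cB(1) by (rule finite_subset) simp
  have neB: "B \<noteq> {}" using cB(2) by auto
  have "let A = sh_set ch sel K ns (\<lambda>s t i. Y s t i \<omega>) (Suc s0 - 1) in
           \<forall>i\<in>A. (\<sigma> i)\<^sup>2 * real ns / (\<Sum>j\<in>A. (\<sigma> j)\<^sup>2) \<in> \<int>"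
    using integral_alloc om s by blast
  then have "\<forall>i\<in>B. (\<sigma> i)\<^sup>2 * real ns / (\<Sum>j\<in>B. (\<sigma> j)\<^sup>2) \<in> \<int>"
    unfolding B_def A_def Let_def by simp
  then have g: "good v ns K B" using cB neB by (simp add: good_def)
  have integ: "\<forall>s\<in>{1..m}. let A = sh_set ch sel K ns (\<lambda>s t i. xw \<omega> (s,t,i)) (s - 1) in
           \<forall>i\<in>A. v i * real ns / (\<Sum>j\<in>A. v j) \<in> \<int>"
    using integral_alloc om by simp
  have R: "B \<in> reach ch v K ns (xw \<omega>) s0"
    using sh_set_reach[OF halving K _ integ, of s0] s0 unfolding B_def A_def by simp
  let ?f = "mh \<omega> (Suc s0) B"
  have W: "A (Suc s0) = sel B ?f" unfolding A_def B_def by simp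
  have h: "sel B ?f \<subseteq> B" "card (sel B ?f) = (card B + 1) div 2"
      "\<forall>i\<in>sel B ?f. \<forall>j\<in>B - sel B ?f. ?f j \<le> ?f i"
    using halving finB neB unfolding is_halving_rule_def by blast+
  have one_out: "1 \<in> B - sel B ?f" using s0 W unfolding B_def by simp
  have F: "\<omega> \<in> Fs (Suc s0) B"
    using om h one_out by (intro CollectI conjI bexI[of _ "sel B ?f"]) auto
  have "\<omega> \<in> Rk (Suc s0 - 1) B" using om R by simp
  moreover have "B \<in> BB" using cB g s0 unfolding B_def by auto
  ultimately show "\<omega> \<in> (\<Union>s\<in>{1..m}. \<Union>B\<in>BB. Rk (s - 1) B \<inter> Fs s B)"
    using s F by blast
qed

lemma main:
  "prob {\<omega>\<in>space M. sh_out ch sel K m ns (\<lambda>s t i. Y s t i \<omega>) \<noteq> 1} \<le> 2 * real m * ee"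
proof -
  have finBB: "finite BB" by (rule finite_subset[of _ "Pow {1..K}"]) auto
  have RF: "Rk (s - 1) B \<inter> Fs s B \<in> sets M" if "s \<in> {1..m}" "B \<in> BB" for s B
    using Rk_sets[of "s - 1" B] Fs_sets[of s B] that by auto
  have U: "(\<Union>s\<in>{1..m}. \<Union>B\<in>BB. Rk (s - 1) B \<inter> Fs s B) \<in> sets M"
    using RF finBB by (intro sets.finite_UN) auto
  have "prob {\<omega>\<in>space M. sh_out ch sel K m ns (\<lambda>s t i. Y s t i \<omega>) \<noteq> 1}
      \<le> prob (\<Union>s\<in>{1..m}. \<Union>B\<in>BB. Rk (s - 1) B \<inter> Fs s B)"
    by (rule finite_measure_mono[OF cover U])
  also have "\<dots> \<le> (\<Sum>s\<in>{1..m}. prob (\<Union>B\<in>BB. Rk (s - 1) B \<inter> Fs s B))"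
    using RF finBB by (intro finite_measure_subadditive_finite) auto
  also have "\<dots> \<le> (\<Sum>s\<in>{1..m}. \<Sum>B\<in>BB. prob (Rk (s - 1) B \<inter> Fs s B))"
    using RF finBB by (intro sum_mono finite_measure_subadditive_finite) auto
  also have "\<dots> \<le> (\<Sum>s\<in>{1..m}. 2 * ee)"
  proof (rule sum_mono)
    fix s assume s: "s \<in> {1..m}"
    have "(\<Sum>B\<in>BB. prob (Rk (s - 1) B \<inter> Fs s B)) = (\<Sum>B\<in>BB. prob (Rk (s - 1) B) * prob (Fs s B))"
      using s by (intro sum.cong refl prod_RF) auto
    also have "\<dots> \<le> (\<Sum>B\<in>BB. prob (Rk (s - 1) B) * (2 * ee))"
      using s Fbound by (intro sum_mono mult_left_mono) auto
    also have "\<dots> = (\<Sum>B\<in>BB. prob (Rk (s - 1) B)) * (2 * ee)" by (simp add: sum_distrib_right)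
    also have "\<dots> \<le> 1 * (2 * ee)"
      using s by (intro mult_right_mono sumR) auto
    finally show "(\<Sum>B\<in>BB. prob (Rk (s - 1) B \<inter> Fs s B)) \<le> 2 * ee" by simp
  qed
  also have "\<dots> = 2 * real m * ee" by simp
  finally show ?thesis .
qed

end

theorem theorem1:
  fixes M :: "'a measure"
    and Y :: "nat \<Rightarrow> nat \<Rightarrow> nat \<Rightarrow> 'a \<Rightarrow> real"
    and \<mu> \<sigma> :: "nat \<Rightarrow> real"
    and K m ns n :: nat
    and ch :: "nat set \<Rightarrow> (nat \<Rightarrow> nat) \<Rightarrow> nat"
    and sel :: "nat set \<Rightarrow> (nat \<Rightarrow> real) \<Rightarrow> nat set"
  assumes "prob_space M"
    and K: "K = 2 ^ m" and m: "m \<ge> 1"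
    and n: "n = m * ns"
    and sig: "\<forall>i\<in>{1..K}. \<sigma> i > 0"
    and gap: "\<mu> 1 > \<mu> 2"
    and sorted: "\<forall>i\<in>{2..<K}. \<mu> i \<ge> \<mu> (i + 1)"
    and indep: "prob_space.indep_vars M (\<lambda>_. borel) (\<lambda>(s, t, i). Y s t i)
                  ({1..m} \<times> {1..ns} \<times> {1..K})"
    and gauss: "\<forall>s\<in>{1..m}. \<forall>t\<in>{1..ns}. \<forall>i\<in>{1..K}.
                  distributed M lborel (Y s t i) (normal_density (\<mu> i) (\<sigma> i))"
    and rule: "is_var_rule (\<lambda>i. (\<sigma> i)\<^sup>2) ch"
    and halving: "is_halving_rule sel"
    and integral_alloc: "\<forall>\<omega>\<in>space M. \<forall>s\<in>{1..m}.
           let A = sh_set ch sel K ns (\<lambda>s t i. Y s t i \<omega>) (s - 1) in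
           \<forall>i\<in>A. (\<sigma> i)\<^sup>2 * real ns / (\<Sum>j\<in>A. (\<sigma> j)\<^sup>2) \<in> \<int>"
  shows "measure M {\<omega>\<in>space M. sh_out ch sel K m ns (\<lambda>s t i. Y s t i \<omega>) \<noteq> 1}
           \<le> 2 * real m * exp (- (real n * (\<mu> 1 - \<mu> 2)\<^sup>2)
                                  / (4 * real m * (\<Sum>j\<in>{1..K}. (\<sigma> j)\<^sup>2)))"
proof -
  interpret prob_space M by fact
  show ?thesis
  proof (cases "ns = 0")
    case True
    then have "n = 0" using n by simp
    then have e: "exp (- (real n * (\<mu> 1 - \<mu> 2)\<^sup>2) / (4 * real m * (\<Sum>j\<in>{1..K}. (\<sigma> j)\<^sup>2))) = 1"
      by simp
    have p: "measure M {\<omega>\<in>space M. sh_out ch sel K m ns (\<lambda>s t i. Y s t i \<omega>) \<noteq> 1} \<le> 1" by simp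
    have "1 \<le> 2 * real m" using m by simp
    then show ?thesis unfolding e using p by linarith
  next
    case False
    interpret shv M Y \<mu> \<sigma> K m ns n ch sel
      using assms False by unfold_locales auto
    have eq: "- (real n * (\<mu> 1 - \<mu> 2)\<^sup>2) / (4 * real m * (\<Sum>j\<in>{1..K}. (\<sigma> j)\<^sup>2))
        = - (real ns * (\<mu> 1 - \<mu> 2)\<^sup>2) / (4 * (\<Sum>j\<in>{1..K}. (\<sigma> j)\<^sup>2))"
      using m n by (simp add: field_simps)
    show ?thesis unfolding eq using main by simp
  qed
qed

end
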